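(* For $i=1,2$ let $\alpha_i\in[-1,1]$ and let $f_{\alpha_i}=h_{\alpha_i}+\overline{g_{\alpha_i}}\in S_H$ with $h_{\alpha_i}(z)+g_{\alpha_i}(z)=\dfrac{z(1-\alpha_i z)}{1-z^2}$. Suppose the dilatation of $f_{\alpha_1}$ is $\omega_1(z)=-z$ and the dilatation of $f_{\alpha_2}$ is $\omega_2(z)=z$. If $\alpha_1\ge\alpha_2$, then for every $0\le t\le1$ the map $f=tf_{\alpha_1}+(1-t)f_{\alpha_2}$ belongs to $S_H$ and maps $E$ onto a domain convex in the direction of the imaginary axis.
   Context: $E=\{z\in\mathbb{C}:|z|<1\}$. For a harmonic mapping $f=h+\overline{g}$ on $E$ with $h,g$ analytic, the dilatation is $\omega=g'/h'$; $f$ is locally univalent and sense-preserving iff $h'\ne0$ and $|\omega|<1$ in $E$. $S_H$ denotes the class of harmonic, univalent, sense-preserving mappings $f=h+\overline{g}$ of $E$ normalized by $f(0)=0$, $f_z(0)=1$. A domain $\Omega$ is convex in the direction of the imaginary axis if every line parallel to the imaginary axis has connected or empty intersection with $\Omega$. *)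

theory Defs
  imports "HOL-Analysis.Analysis"
begin

definition unit_disc :: "complex set" where
  "unit_disc = ball 0 1"

definition harmonic_decomp ::
  "(complex \<Rightarrow> complex) \<Rightarrow> (complex \<Rightarrow> complex) \<Rightarrow> (complex \<Rightarrow> complex) \<Rightarrow> bool" where
  "harmonic_decomp f h g \<longleftrightarrow>
     h holomorphic_on unit_disc \<and> g holomorphic_on unit_disc \<and>
     (\<forall>z\<in>unit_disc. f z = h z + cnj (g z))"

text \<open>Class S_H: harmonic, univalent, sense-preserving (h' /= 0 and |g'/h'| < 1),
  normalized by f(0) = 0 and f_z(0) = h'(0) = 1.\<close>
definition S_H :: "(complex \<Rightarrow> complex) set" where
  "S_H = {f. \<exists>h g. harmonic_decomp f h g \<and> inj_on f unit_disc \<and>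
              (\<forall>z\<in>unit_disc. deriv h z \<noteq> 0 \<and> norm (deriv g z / deriv h z) < 1) \<and>
              f 0 = 0 \<and> deriv h 0 = 1}"

definition convex_in_imag_direction :: "complex set \<Rightarrow> bool" where
  "convex_in_imag_direction \<Omega> \<longleftrightarrow> (\<forall>c::real. connected {w\<in>\<Omega>. Re w = c})"

end

theory Submission
  imports Defs
begin

lemma cnj_deriv_zero:
  assumes "u holomorphic_on S" "v holomorphic_on S" "open S" "z \<in> S" "\<forall>x\<in>S. u x = cnj (v x)"
  shows "deriv u z = 0"
proof -
  have du: "(u has_derivative (\<lambda>k. deriv u z * k)) (at z)"
    using holomorphic_derivI[OF assms(1,3,4)] unfolding has_field_derivative_def by blast
  have dv: "(v has_derivative (\<lambda>k. deriv v z * k)) (at z)"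
    using holomorphic_derivI[OF assms(2,3,4)] unfolding has_field_derivative_def by blast
  have "((\<lambda>x. cnj (v x)) has_derivative (\<lambda>k. cnj (deriv v z * k))) (at z)"
    using has_derivative_cnj[OF dv] .
  then have "(u has_derivative (\<lambda>k. cnj (deriv v z * k))) (at z)"
    by (rule has_derivative_transform_within_open[OF _ assms(3,4)]) (use assms(5) in auto)
  then have eq: "(\<lambda>k. deriv u z * k) = (\<lambda>k. cnj (deriv v z * k))"
    using has_derivative_unique[OF du] by blast
  have e1: "deriv u z = cnj (deriv v z)" using fun_cong[OF eq, of 1] by simp
  have e2: "deriv u z * \<i> = cnj (deriv v z * \<i>)" using fun_cong[OF eq, of \<i>] by simp
  then have "\<i> * deriv u z = - \<i> * deriv u z" using e1 by simp
  then show ?thesis by simp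
qed

lemma phi_deriv:
  assumes "norm z < 1"
  shows "((\<lambda>z. z * (1 - complex_of_real a * z) / (1 - z^2)) has_field_derivative
          (1 - 2 * complex_of_real a * z + z^2) / (1 - z^2)^2) (at z)"
proof -
  have nz: "1 - z^2 \<noteq> 0"
  proof
    assume "1 - z^2 = 0"
    then have "norm (z^2) = 1" by (metis norm_one right_minus_eq)
    moreover have "cmod z * cmod z < 1 * 1" using assms by (intro mult_strict_mono) auto
    ultimately show False by (simp add: norm_power norm_mult power2_eq_square)
  qed
  have d1: "((\<lambda>z. z * (1 - complex_of_real a * z)) has_field_derivative
      (1 - complex_of_real a * z - z * complex_of_real a)) (at z)"
    by (rule derivative_eq_intros refl)+ simp
  have d2: "((\<lambda>z. 1 - z^2) has_field_derivative (- 2 * z)) (at z)"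
    by (rule derivative_eq_intros refl)+ simp
  have "((\<lambda>z. z * (1 - complex_of_real a * z) / (1 - z^2)) has_field_derivative
     ((1 - complex_of_real a * z - z * complex_of_real a) * (1 - z^2) - z * (1 - complex_of_real a * z) * (- 2 * z)) / ((1 - z^2) * (1 - z^2))) (at z)"
    by (rule DERIV_divide[OF d1 d2 nz])
  moreover have "((1 - complex_of_real a * z - z * complex_of_real a) * (1 - z^2) - z * (1 - complex_of_real a * z) * (- 2 * z)) / ((1 - z^2) * (1 - z^2))
     = (1 - 2 * complex_of_real a * z + z^2) / (1 - z^2)^2"
    by (simp add: power2_eq_square algebra_simps)
  ultimately show ?thesis by simp
qed


lemma subst_w1:
  fixes w :: complex and al :: real
  assumes "w \<noteq> 0" "w + 1 \<noteq> 0"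
  shows "(1 - 2 * complex_of_real al * ((w-1)/(w+1)) + ((w-1)/(w+1))^2) /
           ((1 - (w-1)/(w+1))^3 * (1 + (w-1)/(w+1))^2)
         = (w+1)^3 / (16 * w^2) * (complex_of_real (1-al) * w^2 + complex_of_real (1+al))"
proof -
  have e1: "1 - (w-1)/(w+1) = 2/(w+1)" using assms by (simp add: field_simps)
  have e2: "1 + (w-1)/(w+1) = 2*w/(w+1)" using assms by (simp add: field_simps)
  have e3: "1 - 2 * complex_of_real al * ((w-1)/(w+1)) + ((w-1)/(w+1))^2
      = 2*(complex_of_real (1-al) * w^2 + complex_of_real (1+al))/(w+1)^2"
  proof -
    define z where "z = (w-1)/(w+1)"
    have zd: "z * (w+1) = w - 1" unfolding z_def using assms by simp
    have "(1 - 2 * complex_of_real al * z + z^2) * (w+1)^2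
        = (w+1)^2 - 2 * complex_of_real al * (z*(w+1)) * (w+1) + (z*(w+1))^2"
      by (simp add: algebra_simps power2_eq_square)
    also have "\<dots> = 2*(complex_of_real (1-al) * w^2 + complex_of_real (1+al))"
      unfolding zd by (simp add: algebra_simps power2_eq_square)
    finally show ?thesis unfolding z_def[symmetric] using assms by (simp add: eq_divide_eq)
  qed
  have g: "\<And>X d::complex. d \<noteq> 0 \<Longrightarrow> 2*X/d^2 / ((2/d)^3*(2*w/d)^2) = d^3/(16*w^2)*X"
    using assms by (simp add: field_simps power2_eq_square power3_eq_cube)
  show ?thesis unfolding e1 e2 e3 by (rule g) (use assms in simp)
qed

lemma subst_w2:
  fixes w :: complex and al :: real
  assumes "w \<noteq> 0" "w + 1 \<noteq> 0"
  shows "(1 - 2 * complex_of_real al * ((w-1)/(w+1)) + ((w-1)/(w+1))^2) /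
           ((1 - (w-1)/(w+1))^2 * (1 + (w-1)/(w+1))^3)
         = (w+1)^3 / (16 * w^2) * ((complex_of_real (1-al) * w^2 + complex_of_real (1+al)) / w)"
proof -
  have e1: "1 - (w-1)/(w+1) = 2/(w+1)" using assms by (simp add: field_simps)
  have e2: "1 + (w-1)/(w+1) = 2*w/(w+1)" using assms by (simp add: field_simps)
  have e3: "1 - 2 * complex_of_real al * ((w-1)/(w+1)) + ((w-1)/(w+1))^2
      = 2*(complex_of_real (1-al) * w^2 + complex_of_real (1+al))/(w+1)^2"
  proof -
    define z where "z = (w-1)/(w+1)"
    have zd: "z * (w+1) = w - 1" unfolding z_def using assms by simp
    have "(1 - 2 * complex_of_real al * z + z^2) * (w+1)^2
        = (w+1)^2 - 2 * complex_of_real al * (z*(w+1)) * (w+1) + (z*(w+1))^2"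
      by (simp add: algebra_simps power2_eq_square)
    also have "\<dots> = 2*(complex_of_real (1-al) * w^2 + complex_of_real (1+al))"
      unfolding zd by (simp add: algebra_simps power2_eq_square)
    finally show ?thesis unfolding z_def[symmetric] using assms by (simp add: eq_divide_eq)
  qed
  have g: "\<And>X d::complex. d \<noteq> 0 \<Longrightarrow> 2*X/d^2 / ((2/d)^2*(2*w/d)^3) = d^3/(16*w^2)*(X/w)"
    using assms by (simp add: field_simps power2_eq_square power3_eq_cube)
  show ?thesis unfolding e1 e2 e3 by (rule g) (use assms in simp)
qed

lemma core_real:
  fixes u y a1 a2 b1 b2 :: real
  assumes "u > 0" "a1 \<ge> 0" "a2 \<ge> 0" "b1 \<ge> 0" "b2 \<ge> 0" "a1*b2 \<le> a2*b1"
  shows "u*(a1*a2*(u^2+y^2)^2 + a1*b2*(u^2 - 3*y^2) + a2*b1*(u^2+y^2) + b1*b2) \<ge> 0"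
proof -
  define R where "R = u^2+y^2"
  define m where "m = a1*b2"
  have R0: "R \<ge> 0" unfolding R_def by simp
  have m0: "m \<ge> 0" unfolding m_def using assms by simp
  have mm: "m*m \<le> (a1*a2)*(b1*b2)"
  proof -
    have "m*m \<le> m*(a2*b1)" using m0 assms(6) m_def mult_left_mono by blast
    also have "\<dots> = (a1*a2)*(b1*b2)" unfolding m_def by (simp add: algebra_simps)
    finally show ?thesis .
  qed
  have key: "a1*a2*R^2 + b1*b2 \<ge> 2*m*R"
  proof (cases "a1*a2 = 0")
    case True
    then have "m*m \<le> 0" using mm by (simp only: True mult_zero_left)
    then have "m = 0" using m0 by (simp add: mult_le_0_iff) 
    then show ?thesis using True assms by simp
  next
    case False
    then have p: "a1*a2 > 0" using assms by (simp add: less_le)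
    have "(a1*a2)*(a1*a2*R^2 + b1*b2 - 2*m*R) = (a1*a2*R - m)^2 + ((a1*a2)*(b1*b2) - m*m)"
      by (simp add: algebra_simps power2_eq_square)
    also have "\<dots> \<ge> 0" using mm by simp
    finally have "(a1*a2)*(a1*a2*R^2 + b1*b2 - 2*m*R) \<ge> 0" .
    then have "a1*a2*R^2 + b1*b2 - 2*m*R \<ge> 0" using p by (simp add: zero_le_mult_iff)
    then show ?thesis by simp
  qed
  have "u^2 - 3*y^2 \<ge> -3*R" unfolding R_def by simp
  then have "a1*b2*(u^2 - 3*y^2) \<ge> m*(-3*R)" unfolding m_def
    using mult_left_mono[OF _ mult_nonneg_nonneg[OF assms(2) assms(5)]] by blast
  moreover have "a2*b1*R \<ge> m*R" using assms(6) R0 unfolding m_def by (simp add: mult_right_mono)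
  ultimately have "a1*a2*R^2 + a1*b2*(u^2 - 3*y^2) + a2*b1*R + b1*b2 \<ge> 0"
    using key by linarith
  then show ?thesis unfolding R_def using assms(1) by simp
qed


lemma poly_nz:
  fixes w :: complex and al :: real
  assumes "Re w > 0" "-1 \<le> al" "al \<le> 1"
  shows "complex_of_real (1-al) * w^2 + complex_of_real (1+al) \<noteq> 0"
proof
  assume h: "complex_of_real (1-al) * w^2 + complex_of_real (1+al) = 0"
  obtain u y where w: "w = Complex u y" by (cases w)
  have re: "(1-al)*(u^2 - y^2) + (1+al) = 0" and im: "(1-al)*(2*u*y) = 0"
    using arg_cong[OF h, of Re] arg_cong[OF h, of Im] unfolding w
    by (simp_all add: power2_eq_square algebra_simps)
  have u: "u > 0" using assms(1) w by simp
  show False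
  proof (cases "al = 1")
    case True then show ?thesis using re by simp
  next
    case False
    then have "y = 0" using im u assms by simp
    then have "(1-al)*u^2 + (1+al) = 0" using re by simp
    moreover have "(1-al)*u^2 > 0" using False assms u by simp
    ultimately show False using assms by linarith
  qed
qed

lemma re_conj_nonneg:
  fixes w :: complex and a1 a2 b1 b2 :: real
  assumes "Re w > 0" "a1 \<ge> 0" "a2 \<ge> 0" "b1 \<ge> 0" "b2 \<ge> 0" "a1*b2 \<le> a2*b1"
  shows "Re ((of_real a1 * w^2 + of_real b1) * cnj ((of_real a2 * w^2 + of_real b2) / w)) \<ge> 0"
proof -
  obtain u y where w: "w = Complex u y" by (cases w)
  have u: "u > 0" using assms(1) w by simp
  have R: "u^2 + y^2 > 0" using u by (simp add: add_pos_nonneg)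
  have "Re ((of_real a1 * w^2 + of_real b1) * cnj ((of_real a2 * w^2 + of_real b2) / w))
      = u*(a1*a2*(u^2+y^2)^2 + a1*b2*(u^2 - 3*y^2) + a2*b1*(u^2+y^2) + b1*b2) / (u^2+y^2)"
    unfolding w using R
    by (simp add: Re_divide Im_divide power2_eq_square field_simps)
  also have "\<dots> \<ge> 0" using core_real[OF u assms(2-6), of y] R by simp
  finally show ?thesis .
qed

lemma disc_w:
  fixes z :: complex
  assumes "norm z < 1"
  shows "Re ((1+z)/(1-z)) > 0" "(1+z)/(1-z) \<noteq> 0" "(1+z)/(1-z) + 1 \<noteq> 0"
        "z = ((1+z)/(1-z) - 1)/((1+z)/(1-z) + 1)"
proof -
  have z1: "1 - z \<noteq> 0" using assms by auto
  have z2: "1 + z \<noteq> 0"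
  proof
    assume h: "1 + z = 0"
    have "z = (1 + z) - 1" by simp
    also have "\<dots> = -1" using h by simp
    finally show False using assms by simp
  qed
  have n2: "(Re z)^2 + (Im z)^2 < 1"
  proof -
    have "(cmod z)^2 < 1" using assms by (simp add: abs_square_less_1)
    then show ?thesis by (simp add: cmod_power2)
  qed
  have "Re ((1+z)/(1-z)) = (Re (1+z) * Re (1-z) + Im (1+z) * Im (1-z)) / (cmod (1-z))^2"
    by (rule Re_divide')
  also have "Re (1+z) * Re (1-z) + Im (1+z) * Im (1-z) = 1 - (Re z)^2 - (Im z)^2"
    by (simp add: power2_eq_square algebra_simps)
  finally have "Re ((1+z)/(1-z)) = (1 - (Re z)^2 - (Im z)^2) / (cmod (1-z))^2" .
  moreover have "(cmod (1-z))^2 > 0" using z1 by simp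
  ultimately show "Re ((1+z)/(1-z)) > 0" using n2 by simp
  show "(1+z)/(1-z) \<noteq> 0" using z1 z2 by simp
  have e: "(1+z)/(1-z) + 1 = 2/(1-z)" using z1 by (simp add: field_simps)
  then show "(1+z)/(1-z) + 1 \<noteq> 0" using z1 by simp
  have e2: "(1+z)/(1-z) - 1 = 2*z/(1-z)" using z1 by (simp add: field_simps)
  show "z = ((1+z)/(1-z) - 1)/((1+z)/(1-z) + 1)" unfolding e e2 using z1 by simp
qed

lemma norm_diff_sq:
  fixes A B :: complex
  shows "(norm (B - A))^2 = (norm (A + B))^2 - 4 * Re (A * cnj B)"
  by (simp only: cmod_power2) (simp add: power2_eq_square algebra_simps)

lemma sense_alg:
  fixes z :: complex and al1 al2 t :: real
  assumes "norm z < 1" "-1 \<le> al2" "al2 \<le> al1" "al1 \<le> 1" "0 \<le> t" "t \<le> 1"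
  defines "P \<equiv> complex_of_real t * ((1 - 2 * complex_of_real al1 * z + z^2) / ((1-z)^3 * (1+z)^2))"
      and "Q \<equiv> complex_of_real (1-t) * ((1 - 2 * complex_of_real al2 * z + z^2) / ((1-z)^2 * (1+z)^3))"
  shows "P + Q \<noteq> 0 \<and> norm (z * (Q - P)) < norm (P + Q)"
proof -
  define w where "w = (1+z)/(1-z)"
  have wre: "Re w > 0" and wnz: "w \<noteq> 0" and w1: "w + 1 \<noteq> 0" and zw: "z = (w-1)/(w+1)"
    using disc_w[OF assms(1)] unfolding w_def by auto
  define K where "K = (w+1)^3 / (16 * w^2)"
  define Y1 where "Y1 = complex_of_real (1-al1) * w^2 + complex_of_real (1+al1)"
  define Y2 where "Y2 = complex_of_real (1-al2) * w^2 + complex_of_real (1+al2)"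
  define A where "A = complex_of_real t * Y1"
  define B where "B = complex_of_real (1-t) * (Y2 / w)"
  have PA: "P = K * A"
    unfolding P_def A_def K_def Y1_def zw subst_w1[OF wnz w1] by (rule mult.left_commute)
  have QB: "Q = K * B"
    unfolding Q_def B_def K_def Y2_def zw subst_w2[OF wnz w1] by (rule mult.left_commute)
  have Knz: "K \<noteq> 0" unfolding K_def using wnz w1 by simp
  have Y1nz: "Y1 \<noteq> 0" unfolding Y1_def using poly_nz[OF wre] assms by simp
  have Y2nz: "Y2 \<noteq> 0" unfolding Y2_def using poly_nz[OF wre] assms by simp
  have ab: "(1-al1)*(1+al2) \<le> (1-al2)*(1+al1)" using assms by (simp add: algebra_simps)
  have r0: "Re (Y1 * cnj (Y2 / w)) \<ge> 0"
    unfolding Y1_def Y2_def by (rule re_conj_nonneg[OF wre]) (use assms ab in auto)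
  define X where "X = Y1 * cnj (Y2 / w)"
  have "A * cnj B = complex_of_real (t*(1-t)) * X"
    unfolding A_def B_def X_def by simp
  then have "Re (A * cnj B) = t*(1-t) * Re X" by simp
  then have reAB: "Re (A * cnj B) \<ge> 0" using r0 assms unfolding X_def by simp
  have ABnz: "A + B \<noteq> 0"
  proof
    assume h: "A + B = 0"
    then have "B = - A" by (simp add: add_eq_0_iff2)
    then have "Re (A * cnj B) = - (Re A * Re A + Im A * Im A)" by simp
    then have "Re A * Re A + Im A * Im A = 0"
      using reAB zero_le_square[of "Re A"] zero_le_square[of "Im A"] by linarith
    then have "Re A = 0 \<and> Im A = 0" by (simp add: sum_squares_eq_zero_iff)
    then have "A = 0" by (simp add: complex_eq_iff)
    then have "B = 0" using h by simp
    have "t = 0" using \<open>A = 0\<close> Y1nz unfolding A_def by simp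
    moreover have "1 - t = 0" using \<open>B = 0\<close> Y2nz wnz unfolding B_def by simp
    ultimately show False by simp
  qed
  have le: "norm (B - A) \<le> norm (A + B)"
    using norm_diff_sq[of B A] reAB by (smt (verit) norm_ge_zero power2_le_imp_le)
  have "norm (z * (Q - P)) = norm z * (norm K * norm (B - A))"
  proof -
    have "z * (K * B - K * A) = z * K * (B - A)" by (simp add: algebra_simps)
    then show ?thesis unfolding PA QB by (simp only: norm_mult mult.assoc)
  qed
  also have "\<dots> < norm K * norm (A + B)"
  proof -
    have "norm K * norm (B - A) \<le> norm K * norm (A + B)" using le by (simp add: mult_left_mono)
    moreover have pos: "norm K * norm (A + B) > 0" using Knz ABnz by simp
    ultimately have "norm z * (norm K * norm (B - A)) \<le> norm z * (norm K * norm (A + B))"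
      by (auto intro: mult_left_mono)
    moreover have "norm z * (norm K * norm (A + B)) < 1 * (norm K * norm (A + B))"
      using mult_strict_right_mono[OF assms(1) pos] .
    ultimately show ?thesis by linarith
  qed
  also have "\<dots> = norm (P + Q)" unfolding PA QB by (simp add: norm_mult flip: distrib_left)
  finally show ?thesis using ABnz Knz unfolding PA QB by (simp flip: distrib_left)
qed

definition solx :: "real \<Rightarrow> real \<Rightarrow> real \<Rightarrow> real" where
  "solx a b y = (if a = 0 then - b / y else (y + sqrt (y^2 + 4*a*b)) / (2*a))"

lemma sol_ok:
  fixes a b y :: real
  assumes "a \<ge> 0" "b \<ge> 0" "a + b > 0" "a > 0 \<or> y < 0" "b > 0 \<or> y > 0"
  shows "solx a b y > 0 \<and> a * solx a b y - b / solx a b y = y"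
proof (cases "a = 0")
  case True
  then have y: "y < 0" and b: "b > 0" using assms by auto
  have "solx a b y = - b / y" using True by (simp add: solx_def)
  moreover have "- b / y > 0" using divide_pos_neg[OF b y] by simp
  moreover have "a * (- b / y) - b / (- b / y) = y" using True y b by (simp add: field_simps)
  ultimately show ?thesis by simp
next
  case False
  then have a: "a > 0" using assms by simp
  define S where "S = sqrt (y^2 + 4*a*b)"
  have h4: "0 \<le> 4*a*b" using assms(1,2) by simp
  have nn: "y^2 + 4*a*b \<ge> 0" using h4 zero_le_power2[of y] by linarith
  have S0: "S \<ge> 0" unfolding S_def using nn by simp
  have SS: "S^2 = y^2 + 4*a*b" unfolding S_def using nn by simp
  have yS: "y + S > 0"
  proof (cases "b > 0")
    case True
    then have "S^2 > y^2" using SS a by simp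
    then have "S > \<bar>y\<bar>" using S0 by (metis abs_le_square_iff abs_of_nonneg not_less)
    then show ?thesis by linarith
  next
    case False
    then have "y > 0" using assms by auto
    then show ?thesis using S0 by simp
  qed
  have sv: "solx a b y = (y + S) / (2*a)" using False by (simp add: solx_def S_def)
  have pos: "(y + S) / (2*a) > 0" using yS a by simp
  have "a * ((y + S) / (2*a)) - b / ((y + S) / (2*a)) = y"
  proof -
    have e1: "a*((y+S)/(2*a)) = (y+S)/2" using a by simp
    have e2: "b/((y+S)/(2*a)) = 2*a*b/(y+S)" using a yS by (simp add: field_simps)
    have e3: "2*a*b = (y+S)*(S - y)/2" using SS by (simp add: algebra_simps power2_eq_square)
    have gg: "\<And>p q::real. p \<noteq> 0 \<Longrightarrow> p*q/2/p = q/2" by simp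
    have e4: "2*a*b/(y+S) = (S - y)/2" unfolding e3 using yS gg[of "y+S" "S-y"] by simp
    show ?thesis unfolding e1 e2 e4 by (simp add: field_simps)
  qed
  then show ?thesis using sv pos by simp
qed

lemma sol_unique:
  fixes a b x x' :: real
  assumes "a \<ge> 0" "b \<ge> 0" "a + b > 0" "x > 0" "x' > 0" "a * x - b / x = a * x' - b / x'"
  shows "x = x'"
proof (rule ccontr)
  assume ne: "x \<noteq> x'"
  have "(a * x - b / x) - (a * x' - b / x') = (x - x') * (a + b / (x * x'))"
    using assms(4,5) by (simp add: field_simps)
  moreover have "a + b / (x * x') > 0"
  proof (cases "a > 0")
    case True then show ?thesis using assms by (simp add: add_pos_nonneg)
  next
    case False then have "b > 0" using assms by simp
    then show ?thesis using assms by (intro add_nonneg_pos) auto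
  qed
  ultimately show False using ne assms(6) by simp
qed

lemma sol_deriv:
  fixes a b y :: real
  assumes "a \<ge> 0" "b \<ge> 0" "a + b > 0" "a > 0 \<or> y < 0" "b > 0 \<or> y > 0"
  shows "\<exists>d. (solx a b has_real_derivative d) (at y)"
proof (cases "a = 0")
  case True
  then have y: "y \<noteq> 0" using assms by auto
  have e: "solx a b = (\<lambda>y. - b / y)" using True by (simp add: solx_def fun_eq_iff)
  have "((\<lambda>y. - b / y) has_real_derivative (b / y^2)) (at y)"
    using y by (auto intro!: derivative_eq_intros simp: power2_eq_square field_simps)
  then show ?thesis unfolding e by blast
next
  case False
  then have a: "a > 0" using assms by simp
  have pos: "y^2 + 4*a*b > 0"
  proof (cases "b > 0")
    case True then show ?thesis using a by (simp add: add_nonneg_pos)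
  next
    case False then have "y > 0" using assms by auto
    then show ?thesis using assms by (simp add: add_pos_nonneg)
  qed
  have e: "solx a b = (\<lambda>y. (y + sqrt (y^2 + 4*a*b)) / (2*a))" using False by (simp add: solx_def fun_eq_iff)
  have d_in: "((\<lambda>y. y^2 + 4*a*b) has_real_derivative 2*y) (at y)"
    by (auto intro!: derivative_eq_intros)
  have d_sq: "((\<lambda>y. sqrt (y^2 + 4*a*b)) has_real_derivative (inverse (sqrt (y^2 + 4*a*b)) / 2 * (2*y))) (at y)"
    by (rule DERIV_chain2[OF DERIV_real_sqrt[OF pos] d_in])
  have "((\<lambda>y. (y + sqrt (y^2 + 4*a*b)) / (2*a)) has_real_derivative
        (1 + inverse (sqrt (y^2 + 4*a*b)) / 2 * (2*y)) / (2*a)) (at y)"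
    by (intro DERIV_cdivide DERIV_add DERIV_ident d_sq)
  then show ?thesis unfolding e by blast
qed

lemma V_from:
  fixes a b x :: real
  assumes "a \<ge> 0" "b \<ge> 0" "a + b > 0" "x > 0"
  shows "(a > 0 \<or> a * x - b / x < 0) \<and> (b > 0 \<or> a * x - b / x > 0)"
  using assms by (cases "a = 0"; cases "b = 0") auto

lemma curve:
  fixes a b K :: real
  assumes "a \<ge> 0" "b \<ge> 0" "a + b > 0" "a > 0 \<or> K < 0" "b > 0 \<or> K > 0"
  shows "\<And>th. \<bar>th\<bar> < pi/2 \<Longrightarrow> cos th * (a * exp (ln (solx a b (K / cos th))) - b * exp (- ln (solx a b (K / cos th)))) = K"
    and "\<And>th. \<bar>th\<bar> < pi/2 \<Longrightarrow> \<exists>d. ((\<lambda>th. ln (solx a b (K / cos th))) has_real_derivative d) (at th)"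
    and "\<And>x th. \<bar>th\<bar> < pi/2 \<Longrightarrow> cos th * (a * exp x - b * exp (- x)) = K \<Longrightarrow> x = ln (solx a b (K / cos th))"
proof -
  fix th :: real
  assume th: "\<bar>th\<bar> < pi/2"
  have c: "cos th > 0" using th by (intro cos_gt_zero_pi) auto
  have V: "(a > 0 \<or> K / cos th < 0) \<and> (b > 0 \<or> K / cos th > 0)"
    using assms(4,5) c by (auto simp: divide_neg_pos divide_pos_pos)
  have so: "solx a b (K / cos th) > 0 \<and> a * solx a b (K / cos th) - b / solx a b (K / cos th) = K / cos th"
    using sol_ok[OF assms(1-3)] V by blast
  {
    define x where "x = solx a b (K / cos th)"
    have x0: "x > 0" and xe: "a * x - b / x = K / cos th" using so unfolding x_def by auto
    have "exp (ln x) = x" "exp (- ln x) = 1 / x" using x0 by (auto simp: exp_minus inverse_eq_divide)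
    then have "cos th * (a * exp (ln x) - b * exp (- ln x)) = cos th * (K / cos th)"
      using xe by simp
    also have "\<dots> = K" using c by simp
    finally show "cos th * (a * exp (ln (solx a b (K / cos th))) - b * exp (- ln (solx a b (K / cos th)))) = K"
      unfolding x_def .
  }
  {
    obtain d where d: "(solx a b has_real_derivative d) (at (K / cos th))"
      using sol_deriv[OF assms(1-3)] V by blast
    have "((\<lambda>th. K / cos th) has_real_derivative (K * sin th / (cos th)^2)) (at th)"
      using c by (auto intro!: derivative_eq_intros simp: power2_eq_square)
    from DERIV_chain2[OF d this]
    have d2: "((\<lambda>th. solx a b (K / cos th)) has_real_derivative d * (K * sin th / (cos th)^2)) (at th)" .
    have "((\<lambda>th. ln (solx a b (K / cos th))) has_real_derivative
            (1 / solx a b (K / cos th)) * (d * (K * sin th / (cos th)^2))) (at th)"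
      using so by (intro DERIV_chain2[OF _ d2] DERIV_ln_divide) auto
    then show "\<exists>d. ((\<lambda>th. ln (solx a b (K / cos th))) has_real_derivative d) (at th)" by blast
  }
  {
    fix x
    assume h: "cos th * (a * exp x - b * exp (- x)) = K"
    have "a * exp x - b / exp x = K / cos th" using h c by (simp add: exp_minus field_simps)
    then have eq: "a * exp x - b / exp x = a * solx a b (K / cos th) - b / solx a b (K / cos th)"
      using so by simp
    have "exp x = solx a b (K / cos th)"
      by (rule sol_unique[OF assms(1-3) exp_gt_zero _ eq]) (use so in blast)
    then show "x = ln (solx a b (K / cos th))" by (metis ln_exp)
  }
qed

definition Psi :: "complex \<Rightarrow> complex" where
  "Psi s = (exp s - 1) / (exp s + 1)"

lemma Psi_in:
  assumes "\<bar>Im s\<bar> < pi/2"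
  shows "exp s + 1 \<noteq> 0 \<and> norm (Psi s) < 1"
proof -
  have c: "cos (Im s) > 0" using assms by (intro cos_gt_zero_pi) auto
  have re: "Re (exp s) > 0" using c by (simp add: Re_exp)
  have nz: "exp s + 1 \<noteq> 0"
  proof
    assume "exp s + 1 = 0"
    then have "Re (exp s + 1) = 0" by simp
    then show False using re by simp
  qed
  have "(cmod (exp s - 1))^2 = (cmod (exp s + 1))^2 - 4 * Re (exp s)"
    by (simp only: cmod_power2) (simp add: power2_eq_square algebra_simps)
  then have sq: "(cmod (exp s - 1))^2 < (cmod (exp s + 1))^2" using re by linarith
  have "cmod (exp s - 1) < cmod (exp s + 1)"
    using sq by (rule power_less_imp_less_base) simp
  then have "norm (Psi s) < 1" unfolding Psi_def using nz by (simp add: norm_divide divide_less_eq)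
  then show ?thesis using nz by simp
qed

lemma Psi_surj:
  assumes "norm z < 1"
  shows "\<exists>s. \<bar>Im s\<bar> < pi/2 \<and> Psi s = z"
proof -
  define w where "w = (1+z)/(1-z)"
  have wre: "Re w > 0" and wnz: "w \<noteq> 0" and zw: "z = (w-1)/(w+1)"
    using disc_w[OF assms] unfolding w_def by auto
  have "exp (Ln w) = w" using wnz by simp
  then have "Psi (Ln w) = z" unfolding Psi_def using zw by simp
  moreover have "\<bar>Im (Ln w)\<bar> < pi/2" using Re_Ln_pos_lt_imp[OF wre] .
  ultimately show ?thesis by blast
qed

lemma phi_x:
  fixes x :: complex and al :: real
  assumes "x \<noteq> 0" "x + 1 \<noteq> 0"
  shows "((x-1)/(x+1)) * (1 - of_real al * ((x-1)/(x+1))) / (1 - ((x-1)/(x+1))^2)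
       = (of_real (1-al) * x - of_real (1+al) / x) / 4 + of_real al / 2"
proof -
  define P where "P = (x-1)/(x+1)"
  have Pd: "P * (x+1) = x - 1" unfolding P_def using assms by simp
  have "(1 - P^2) * (x+1)^2 = (x+1)^2 - (P*(x+1))^2" by (simp add: algebra_simps power2_eq_square)
  also have "\<dots> = 4*x" unfolding Pd by (simp add: algebra_simps power2_eq_square)
  finally have h1: "1 - P^2 = 4*x/(x+1)^2" using assms by (simp add: eq_divide_eq)
  have "(P * (1 - of_real al * P)) * (x+1)^2 = (P*(x+1)) * ((x+1) - of_real al * (P*(x+1)))"
    by (simp add: algebra_simps power2_eq_square)
  also have "\<dots> = (x-1)*((x+1) - of_real al*(x-1))" unfolding Pd ..
  finally have h2: "P * (1 - of_real al * P) = (x-1)*((x+1) - of_real al*(x-1)) / (x+1)^2"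
    using assms by (simp add: eq_divide_eq)
  have g: "\<And>A d. d \<noteq> 0 \<Longrightarrow> (A / d^2) / (4*x/d^2) = A / (4*x)" using assms by simp
  have "P * (1 - of_real al * P) / (1 - P^2) = (x-1)*((x+1) - of_real al*(x-1)) / (4*x)"
    unfolding h1 h2 by (rule g) (use assms in simp)
  also have "\<dots> = (of_real (1-al) * x - of_real (1+al) / x) / 4 + of_real al / 2"
    using assms(1) by (simp add: field_simps)
  finally show ?thesis unfolding P_def .
qed

lemma phi_Psi:
  assumes "\<bar>Im s\<bar> < pi/2"
  shows "Psi s * (1 - of_real al * Psi s) / (1 - (Psi s)^2)
       = (of_real (1-al) * exp s - of_real (1+al) * exp (-s)) / 4 + of_real al / 2"
proof -
  have nz: "exp s + 1 \<noteq> 0" using Psi_in[OF assms] by blast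
  have "exp (-s) = 1 / exp s" by (simp add: exp_minus inverse_eq_divide)
  then show ?thesis unfolding Psi_def using phi_x[OF exp_not_eq_zero nz, of al] by simp
qed

lemma Re_Phi:
  "Re ((of_real a * exp s - of_real b * exp (-s)) / 4 + of_real al / 2)
    = cos (Im s) * (a * exp (Re s) - b * exp (- Re s)) / 4 + al / 2"
  by (simp add: Re_exp algebra_simps)

lemma Re_dPhi:
  "Re ((of_real a * exp s + of_real b * exp (-s)) / 4)
    = cos (Im s) * (a * exp (Re s) + b * exp (- Re s)) / 4"
  by (simp add: Re_exp algebra_simps)

lemma Phi_deriv:
  "((\<lambda>s. (of_real a * exp s - of_real b * exp (-s)) / 4 + of_real al / 2) has_field_derivative
     (of_real a * exp s + of_real b * exp (-s)) / 4) (at s)"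
  by (auto intro!: derivative_eq_intros simp: algebra_simps)

lemma Psi_deriv:
  assumes "exp s + 1 \<noteq> 0"
  shows "\<exists>d. (Psi has_field_derivative d) (at s)"
proof -
  have d1: "((\<lambda>s. exp s - 1) has_field_derivative exp s) (at s)" by (auto intro!: derivative_eq_intros)
  have d2: "((\<lambda>s. exp s + 1) has_field_derivative exp s) (at s)" by (auto intro!: derivative_eq_intros)
  have "((\<lambda>s. (exp s - 1) / (exp s + 1)) has_field_derivative
     ((exp s * (exp s + 1) - (exp s - 1) * exp s) / ((exp s + 1) * (exp s + 1)))) (at s)"
    using DERIV_divide[OF d1 d2] assms by simp
  then show ?thesis unfolding Psi_def[abs_def] by blast
qed

lemma open_disc: "open unit_disc" unfolding unit_disc_def by simp

lemma disc_norm: "z \<in> unit_disc \<longleftrightarrow> norm z < 1" unfolding unit_disc_def by (simp add: dist_norm)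

lemma comp_deriv:
  fixes e al :: real
  assumes "f \<in> S_H" "harmonic_decomp f h g"
    "\<forall>z\<in>unit_disc. h z + g z = z * (1 - complex_of_real al * z) / (1 - z^2)"
    "\<forall>z\<in>unit_disc. deriv g z / deriv h z = complex_of_real e * z"
    "z \<in> unit_disc"
  shows "deriv h z \<noteq> 0 \<and> deriv g z = complex_of_real e * z * deriv h z \<and>
         deriv h z * (1 + complex_of_real e * z) = (1 - 2 * complex_of_real al * z + z^2) / (1 - z^2)^2"
proof -
  obtain H G where hd: "harmonic_decomp f H G" and sp: "\<forall>z\<in>unit_disc. deriv H z \<noteq> 0 \<and> norm (deriv G z / deriv H z) < 1"
    using assms(1) unfolding S_H_def by blast
  have hh: "h holomorphic_on unit_disc" "g holomorphic_on unit_disc" "\<forall>z\<in>unit_disc. f z = h z + cnj (g z)"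
    using assms(2) unfolding harmonic_decomp_def by auto
  have HH: "H holomorphic_on unit_disc" "G holomorphic_on unit_disc" "\<forall>z\<in>unit_disc. f z = H z + cnj (G z)"
    using hd unfolding harmonic_decomp_def by auto
  have dh: "(h has_field_derivative deriv h z) (at z)" using holomorphic_derivI[OF hh(1) open_disc assms(5)] .
  have dg: "(g has_field_derivative deriv g z) (at z)" using holomorphic_derivI[OF hh(2) open_disc assms(5)] .
  have dH: "(H has_field_derivative deriv H z) (at z)" using holomorphic_derivI[OF HH(1) open_disc assms(5)] .
  have dG: "(G has_field_derivative deriv G z) (at z)" using holomorphic_derivI[OF HH(2) open_disc assms(5)] .
  have "deriv (\<lambda>x. h x - H x) z = 0"
  proof (rule cnj_deriv_zero[OF _ _ open_disc assms(5)])
    show "(\<lambda>x. h x - H x) holomorphic_on unit_disc" using hh(1) HH(1) by (intro holomorphic_intros)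
    show "(\<lambda>x. G x - g x) holomorphic_on unit_disc" using hh(2) HH(2) by (intro holomorphic_intros)
    show "\<forall>x\<in>unit_disc. h x - H x = cnj (G x - g x)"
    proof
      fix x assume "x \<in> unit_disc"
      then have "h x + cnj (g x) = H x + cnj (G x)" using hh(3) HH(3) by metis
      then show "h x - H x = cnj (G x - g x)" by (simp add: algebra_simps)
    qed
  qed
  moreover have "deriv (\<lambda>x. h x - H x) z = deriv h z - deriv H z"
    by (rule DERIV_imp_deriv) (intro DERIV_diff dh dH)
  ultimately have hH: "deriv h z = deriv H z" by simp
  then have hnz: "deriv h z \<noteq> 0" using sp assms(5) by simp
  have gz: "deriv g z = complex_of_real e * z * deriv h z"
    using assms(4) assms(5) hnz by (simp add: divide_eq_eq)
  have d1: "((\<lambda>x. h x + g x) has_field_derivative deriv h z + deriv g z) (at z)"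
    by (intro DERIV_add dh dg)
  have d2: "((\<lambda>z. z * (1 - complex_of_real al * z) / (1 - z^2)) has_field_derivative deriv h z + deriv g z) (at z)"
    by (rule has_field_derivative_transform_within_open[OF d1 open_disc assms(5)]) (use assms(3) in auto)
  have "deriv h z + deriv g z = (1 - 2 * complex_of_real al * z + z^2) / (1 - z^2)^2"
    using DERIV_unique[OF d2 phi_deriv] assms(5) disc_norm by blast
  then show ?thesis using hnz gz by (simp add: algebra_simps)
qed

lemma sense_main:
  fixes z d1 d2 :: complex and al1 al2 t :: real
  assumes "norm z < 1" "-1 \<le> al2" "al2 \<le> al1" "al1 \<le> 1" "0 \<le> t" "t \<le> 1"
    "d1 * (1 + complex_of_real (-1) * z) = (1 - 2 * complex_of_real al1 * z + z^2) / (1 - z^2)^2"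
    "d2 * (1 + complex_of_real 1 * z) = (1 - 2 * complex_of_real al2 * z + z^2) / (1 - z^2)^2"
  shows "complex_of_real t * d1 + complex_of_real (1-t) * d2 \<noteq> 0 \<and>
     norm ((complex_of_real t * (complex_of_real (-1) * z * d1) + complex_of_real (1-t) * (complex_of_real 1 * z * d2))
        / (complex_of_real t * d1 + complex_of_real (1-t) * d2)) < 1"
proof -
  have z1: "1 - z \<noteq> 0" using assms(1) by auto
  have z2: "1 + z \<noteq> 0"
  proof
    assume h: "1 + z = 0"
    have "z = (1 + z) - 1" by simp
    also have "\<dots> = -1" using h by simp
    finally show False using assms(1) by simp
  qed
  have q: "(1 - z^2)^2 = (1-z)^2 * (1+z)^2" by (simp add: power2_eq_square algebra_simps)
  have e1: "d1 = (1 - 2 * complex_of_real al1 * z + z^2) / ((1-z)^3 * (1+z)^2)"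
  proof -
    have "d1 * (1 - z) = (1 - 2 * complex_of_real al1 * z + z^2) / ((1-z)^2 * (1+z)^2)"
      using assms(7) q by simp
    moreover have "d1 = (d1 * (1 - z)) / (1 - z)" using z1 by simp
    ultimately have "d1 = (1 - 2 * complex_of_real al1 * z + z^2) / ((1-z)^2 * (1+z)^2) / (1 - z)"
      by metis
    also have "\<dots> = (1 - 2 * complex_of_real al1 * z + z^2) / ((1-z)^3 * (1+z)^2)"
      by (simp add: divide_divide_eq_left power2_eq_square power3_eq_cube mult_ac)
    finally show ?thesis .
  qed
  have e2: "d2 = (1 - 2 * complex_of_real al2 * z + z^2) / ((1-z)^2 * (1+z)^3)"
  proof -
    have "d2 * (1 + z) = (1 - 2 * complex_of_real al2 * z + z^2) / ((1-z)^2 * (1+z)^2)"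
      using assms(8) q by simp
    moreover have "d2 = (d2 * (1 + z)) / (1 + z)" using z2 by simp
    ultimately have "d2 = (1 - 2 * complex_of_real al2 * z + z^2) / ((1-z)^2 * (1+z)^2) / (1 + z)"
      by metis
    also have "\<dots> = (1 - 2 * complex_of_real al2 * z + z^2) / ((1-z)^2 * (1+z)^3)"
      by (simp add: divide_divide_eq_left power2_eq_square power3_eq_cube mult_ac)
    finally show ?thesis .
  qed
  define P where "P = complex_of_real t * ((1 - 2 * complex_of_real al1 * z + z^2) / ((1-z)^3 * (1+z)^2))"
  define Q where "Q = complex_of_real (1-t) * ((1 - 2 * complex_of_real al2 * z + z^2) / ((1-z)^2 * (1+z)^3))"
  have sa: "P + Q \<noteq> 0 \<and> norm (z * (Q - P)) < norm (P + Q)"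
    unfolding P_def Q_def by (rule sense_alg[OF assms(1-6)])
  have H: "complex_of_real t * d1 + complex_of_real (1-t) * d2 = P + Q" unfolding P_def Q_def e1 e2 ..
  have G: "complex_of_real t * (complex_of_real (-1) * z * d1) + complex_of_real (1-t) * (complex_of_real 1 * z * d2) = z * (Q - P)"
  proof -
    have "complex_of_real t * (complex_of_real (-1) * z * d1) + complex_of_real (1-t) * (complex_of_real 1 * z * d2)
        = z * (complex_of_real (1-t) * d2 - complex_of_real t * d1)" by (simp add: algebra_simps)
    also have "\<dots> = z * (Q - P)" unfolding P_def Q_def e1 e2 ..
    finally show ?thesis .
  qed
  show ?thesis unfolding H G using sa by (simp add: norm_divide divide_less_eq)
qed

lemma alg1:
  fixes x :: real and P :: complex
  assumes "Re ((complex_of_real x + \<i>) * P) = 0" "Re P > 0"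
  shows "Im ((complex_of_real x + \<i>) * P) > 0"
proof -
  have r: "x * Re P - Im P = 0" using assms(1) by simp
  have "Re P * Im ((complex_of_real x + \<i>) * P) = (Im P)^2 + (Re P)^2"
    using r by (simp add: algebra_simps power2_eq_square)
  also have "\<dots> > 0" using assms(2) by (simp add: add_nonneg_pos)
  finally show ?thesis using assms(2) by (simp add: zero_less_mult_iff)
qed

lemma alg2:
  fixes w u :: complex
  assumes "Re ((1 + w) * u) = 0" "Im ((1 + w) * u) > 0" "norm w < 1"
  shows "Im ((1 - w) * u) > 0"
proof -
  have idt: "Im ((1 - w) * u) * ((1 + Re w)^2 + (Im w)^2)
     = Im ((1 + w) * u) * (1 - (Re w)^2 - (Im w)^2) - 2 * Im w * Re ((1 + w) * u)"
    by (simp add: algebra_simps power2_eq_square)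
  have n: "(Re w)^2 + (Im w)^2 < 1"
  proof -
    have "(cmod w)^2 < 1" using assms(3) by (simp add: abs_square_less_1)
    then show ?thesis by (simp add: cmod_power2)
  qed
  have "Im ((1 - w) * u) * ((1 + Re w)^2 + (Im w)^2) > 0"
    unfolding idt using assms(1,2) n by simp
  moreover have "(1 + Re w)^2 + (Im w)^2 \<ge> 0" by simp
  ultimately show ?thesis by (simp add: zero_less_mult_iff)
qed

lemma curve_deriv:
  fixes h g :: "complex \<Rightarrow> complex" and sg :: "real \<Rightarrow> real" and a b al c th :: real
  assumes hh: "h holomorphic_on unit_disc" and gh: "g holomorphic_on unit_disc"
    and sense: "\<forall>z\<in>unit_disc. deriv h z \<noteq> 0 \<and> norm (deriv g z / deriv h z) < 1"
    and hgPhi: "\<And>s. \<bar>Im s\<bar> < pi/2 \<Longrightarrow> h (Psi s) + g (Psi s) = (of_real a * exp s - of_real b * exp (-s)) / 4 + of_real al / 2"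
    and ab: "a \<ge> 0" "b \<ge> 0" "a + b > 0"
    and sgd: "\<And>th. \<bar>th\<bar> < pi/2 \<Longrightarrow> \<exists>d. (sg has_real_derivative d) (at th)"
    and lev: "\<And>th. \<bar>th\<bar> < pi/2 \<Longrightarrow> Re ((of_real a * exp (Complex (sg th) th) - of_real b * exp (- Complex (sg th) th)) / 4 + of_real al / 2) = c"
    and th: "\<bar>th\<bar> < pi/2"
  shows "((\<lambda>th. Im (h (Psi (Complex (sg th) th))) - Im (g (Psi (Complex (sg th) th)))) has_real_derivative
            Im ((1 - deriv g (Psi (Complex (sg th) th)) / deriv h (Psi (Complex (sg th) th))) *
               (Complex (deriv sg th) 1 * deriv Psi (Complex (sg th) th) * deriv h (Psi (Complex (sg th) th))))) (at th)
     \<and> Im ((1 - deriv g (Psi (Complex (sg th) th)) / deriv h (Psi (Complex (sg th) th))) *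
               (Complex (deriv sg th) 1 * deriv Psi (Complex (sg th) th) * deriv h (Psi (Complex (sg th) th)))) > 0
     \<and> ((\<lambda>th. Psi (Complex (sg th) th)) has_vector_derivative (Complex (deriv sg th) 1 * deriv Psi (Complex (sg th) th))) (at th)"
proof -
  define I where "I = {th::real. \<bar>th\<bar> < pi/2}"
  have oI: "open I" unfolding I_def by (simp add: open_Collect_less continuous_intros)
  have thI: "th \<in> I" using th unfolding I_def by simp
  define Phi where "Phi = (\<lambda>s::complex. (of_real a * exp s - of_real b * exp (-s)) / 4 + of_real al / 2)"
  define Phi' where "Phi' = (\<lambda>s::complex. (of_real a * exp s + of_real b * exp (-s)) / 4)"
  define sf where "sf = (\<lambda>th. Complex (sg th) th)"
  define s where "s = sf th"
  obtain d where d: "(sg has_real_derivative d) (at th)" using sgd[OF th] by blast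
  have dd: "deriv sg th = d" using d by (rule DERIV_imp_deriv)
  define s' where "s' = Complex d 1"
  have ds: "(sf has_vector_derivative s') (at th)"
    unfolding sf_def s'_def has_vector_derivative_complex_iff using d by (auto intro!: derivative_eq_intros)
  have Ims: "\<bar>Im s\<bar> < pi/2" unfolding s_def sf_def using th by simp
  have ps: "exp s + 1 \<noteq> 0 \<and> norm (Psi s) < 1" using Psi_in[OF Ims] .
  obtain p where p: "(Psi has_field_derivative p) (at s)" using Psi_deriv ps by blast
  have dp: "deriv Psi s = p" using p by (rule DERIV_imp_deriv)
  define z where "z = Psi s"
  have zD: "z \<in> unit_disc" using ps unfolding z_def disc_norm by simp
  have dgam: "((Psi \<circ> sf) has_vector_derivative (s' * p)) (at th)"
    using field_vector_diff_chain_at[OF ds] p unfolding s_def by blast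
  have dh: "(h has_field_derivative deriv h z) (at z)" using holomorphic_derivI[OF hh open_disc zD] .
  have dg: "(g has_field_derivative deriv g z) (at z)" using holomorphic_derivI[OF gh open_disc zD] .
  have dq: "((h \<circ> (Psi \<circ> sf)) has_vector_derivative (s' * p * deriv h z)) (at th)"
    using field_vector_diff_chain_at[OF dgam] dh unfolding z_def s_def by (simp add: o_def)
  have dr: "((g \<circ> (Psi \<circ> sf)) has_vector_derivative (s' * p * deriv g z)) (at th)"
    using field_vector_diff_chain_at[OF dgam] dg unfolding z_def s_def by (simp add: o_def)
  have dsum: "((\<lambda>x. h (Psi (sf x)) + g (Psi (sf x))) has_vector_derivative (s' * p * deriv h z + s' * p * deriv g z)) (at th)"
    using has_vector_derivative_add[OF dq dr] by (simp add: o_def)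
  have dPhi0: "(Phi has_field_derivative Phi' s) (at s)" unfolding Phi_def Phi'_def by (rule Phi_deriv)
  have dPhi: "((Phi \<circ> sf) has_vector_derivative (s' * Phi' s)) (at th)"
    using field_vector_diff_chain_at[OF ds] dPhi0 unfolding s_def by blast
  have eqf: "\<And>x. x \<in> I \<Longrightarrow> h (Psi (sf x)) + g (Psi (sf x)) = (Phi \<circ> sf) x"
    unfolding I_def sf_def Phi_def o_def by (rule hgPhi) simp
  have dsum2: "((Phi \<circ> sf) has_vector_derivative (s' * p * deriv h z + s' * p * deriv g z)) (at th)"
    by (rule has_vector_derivative_transform_within_open[OF dsum oI thI eqf])
  have Deq: "s' * p * deriv h z + s' * p * deriv g z = s' * Phi' s"
    using vector_derivative_unique_at[OF dsum2 dPhi] .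
  have dRe: "((\<lambda>x. Re ((Phi \<circ> sf) x)) has_real_derivative Re (s' * Phi' s)) (at th)"
    using has_field_derivative_Re[OF dPhi] .
  have dRe2: "((\<lambda>x. c) has_real_derivative Re (s' * Phi' s)) (at th)"
    by (rule has_field_derivative_transform_within_open[OF dRe oI thI])
       (use lev in \<open>auto simp: I_def sf_def Phi_def\<close>)
  have Re0: "Re (s' * Phi' s) = 0" using DERIV_unique[OF dRe2 DERIV_const] .
  have cs: "cos (Im s) > 0" using Ims by (intro cos_gt_zero_pi) auto
  have pos2: "a * exp (Re s) + b * exp (- Re s) > 0"
  proof (cases "a > 0")
    case True then show ?thesis using ab by (intro add_pos_nonneg) auto
  next
    case False then have "b > 0" using ab by simp
    then show ?thesis using ab by (intro add_nonneg_pos) auto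
  qed
  have RePhi': "Re (Phi' s) > 0" unfolding Phi'_def Re_dPhi using cs pos2 by simp
  have s'eq: "s' = complex_of_real d + \<i>" unfolding s'_def by (simp add: complex_eq_iff)
  have Im0: "Im (s' * Phi' s) > 0" using alg1[of d "Phi' s"] Re0 RePhi' unfolding s'eq by simp
  define w where "w = deriv g z / deriv h z"
  define u where "u = s' * p * deriv h z"
  have hz: "deriv h z \<noteq> 0" and wn: "norm w < 1" using sense zD unfolding w_def by auto
  have gw: "deriv g z = w * deriv h z" unfolding w_def using hz by simp
  have "(1 + w) * u = s' * Phi' s" unfolding u_def using Deq gw by (simp add: algebra_simps)
  then have pos: "Im ((1 - w) * u) > 0" using alg2[of w u] Re0 Im0 wn by simp
  have dIm: "((\<lambda>x. Im (h (Psi (sf x))) - Im (g (Psi (sf x)))) has_real_derivative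
                 (Im (s' * p * deriv h z) - Im (s' * p * deriv g z))) (at th)"
    using DERIV_diff[OF has_field_derivative_Im[OF dq] has_field_derivative_Im[OF dr]] by (simp add: o_def)
  have "Im (s' * p * deriv h z) - Im (s' * p * deriv g z) = Im ((1 - w) * u)"
    unfolding u_def gw by (simp add: algebra_simps)
  then have A1: "((\<lambda>x. Im (h (Psi (sf x))) - Im (g (Psi (sf x)))) has_real_derivative Im ((1 - w) * u)) (at th)"
    using dIm by simp
  have e1: "Complex (deriv sg th) 1 = s'" unfolding dd s'_def ..
  have e2: "deriv Psi (Complex (sg th) th) = p" using dp unfolding s_def sf_def .
  have e3: "Psi (Complex (sg th) th) = z" unfolding z_def s_def sf_def ..
  have e4: "(\<lambda>th. Psi (Complex (sg th) th)) = Psi \<circ> sf" unfolding sf_def o_def ..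
  have e5: "(\<lambda>th. Im (h (Psi (Complex (sg th) th))) - Im (g (Psi (Complex (sg th) th))))
       = (\<lambda>x. Im (h (Psi (sf x))) - Im (g (Psi (sf x))))" unfolding sf_def ..
  show ?thesis unfolding e1 e2 e3 e4 e5 w_def[symmetric] u_def[symmetric]
    using A1 pos dgam by blast
qed


lemma open_image:
  fixes F h g :: "complex \<Rightarrow> complex"
  assumes hh: "h holomorphic_on S" and gh: "g holomorphic_on S" and oS: "open S"
    and sp: "\<forall>z\<in>S. deriv h z \<noteq> 0 \<and> norm (deriv g z / deriv h z) < 1"
    and Fe: "\<forall>z\<in>S. F z = h z + cnj (g z)"
  shows "open (F ` S)"
proof -
  have contF: "continuous_on S F"
  proof -
    have "continuous_on S (\<lambda>z. h z + cnj (g z))"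
      using holomorphic_on_imp_continuous_on[OF hh] holomorphic_on_imp_continuous_on[OF gh]
      by (intro continuous_intros) auto
    then show ?thesis by (rule continuous_on_eq) (use Fe in auto)
  qed
  have "F x \<in> interior (F ` S)" if xS: "x \<in> S" for x
  proof -
    define A where "A = deriv h x"
    define B where "B = deriv g x"
    have dh: "(h has_derivative (*) A) (at x)"
      using holomorphic_derivI[OF hh oS xS, of UNIV] unfolding has_field_derivative_def A_def .
    have dg: "(g has_derivative (*) B) (at x)"
      using holomorphic_derivI[OF gh oS xS, of UNIV] unfolding has_field_derivative_def B_def .
    have d1: "((\<lambda>z. h z + cnj (g z)) has_derivative (\<lambda>k. A * k + cnj (B * k))) (at x)"
      by (intro has_derivative_add dh has_derivative_cnj dg)
    have dF: "(F has_derivative (\<lambda>k. A * k + cnj (B * k))) (at x)"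
      by (rule has_derivative_transform_within_open[OF d1 oS xS]) (use Fe in auto)
    have Anz: "A \<noteq> 0" and BA: "norm (B / A) < 1" using sp xS unfolding A_def B_def by auto
    have "norm B < norm A" using BA Anz by (simp add: norm_divide divide_less_eq)
    then have "(norm B)^2 < (norm A)^2" by (simp add: power_strict_mono)
    then have dpos: "(Re A)^2 + (Im A)^2 - (Re B)^2 - (Im B)^2 > 0" by (simp add: cmod_power2)
    define dl where "dl = (Re A)^2 + (Im A)^2 - (Re B)^2 - (Im B)^2"
    have dl0: "dl \<noteq> 0" using dpos unfolding dl_def by simp
    define c1 where "c1 = cnj A / of_real dl"
    define c2 where "c2 = - cnj B / of_real dl"
    define G' where "G' = (\<lambda>w. c1 * w + c2 * cnj w)"
    have blG: "bounded_linear G'"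
      unfolding G'_def
      by (intro bounded_linear_add bounded_linear_mult_right
            bounded_linear_compose[OF bounded_linear_mult_right bounded_linear_cnj])
    have inv: "(\<lambda>k. A * k + cnj (B * k)) \<circ> G' = id"
    proof
      fix w
      show "((\<lambda>k. A * k + cnj (B * k)) \<circ> G') w = id w"
      proof -
        have dl0': "complex_of_real dl \<noteq> 0" using dl0 by simp
        have "A * (c1*w + c2*cnj w) + cnj (B * (c1*w + c2*cnj w)) = (A * cnj A - B * cnj B) * w / of_real dl"
          unfolding c1_def c2_def using dl0' by (simp add: field_simps)
        also have "A * cnj A - B * cnj B = of_real dl"
          by (simp add: complex_mult_cnj dl_def)
        finally show ?thesis unfolding G'_def o_def using dl0' by simp
      qed
    qed
    show ?thesis
      by (rule sussmann_open_mapping[OF oS contF xS dF blG inv subset_refl])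
         (simp add: interior_open[OF oS] xS)
  qed
  then have "F ` S \<subseteq> interior (F ` S)" by blast
  then show ?thesis using interior_subset[of "F ` S"] by (metis open_interior subset_antisym)
qed

lemma lin_phi:
  fixes z :: complex and t a1 a2 :: real
  shows "complex_of_real t * (z * (1 - complex_of_real a1 * z) / (1 - z^2)) +
         complex_of_real (1-t) * (z * (1 - complex_of_real a2 * z) / (1 - z^2))
       = z * (1 - complex_of_real (t*a1 + (1-t)*a2) * z) / (1 - z^2)"
proof -
  have "complex_of_real t * (z * (1 - complex_of_real a1 * z)) +
        complex_of_real (1-t) * (z * (1 - complex_of_real a2 * z))
       = z * (1 - complex_of_real (t*a1 + (1-t)*a2) * z)" by (simp add: algebra_simps)
  then show ?thesis by (metis (no_types, lifting) add_divide_distrib times_divide_eq_right)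
qed

theorem theorem2p7:
  fixes f1 f2 h1 g1 h2 g2 :: "complex \<Rightarrow> complex" and \<alpha>1 \<alpha>2 t :: real
  assumes "\<alpha>1 \<in> {-1..1}" and "\<alpha>2 \<in> {-1..1}"
    and "f1 \<in> S_H" and "f2 \<in> S_H"
    and "harmonic_decomp f1 h1 g1" and "harmonic_decomp f2 h2 g2"
    and "\<forall>z\<in>unit_disc. h1 z + g1 z = z * (1 - complex_of_real \<alpha>1 * z) / (1 - z^2)"
    and "\<forall>z\<in>unit_disc. h2 z + g2 z = z * (1 - complex_of_real \<alpha>2 * z) / (1 - z^2)"
    and "\<forall>z\<in>unit_disc. deriv g1 z / deriv h1 z = - z"
    and "\<forall>z\<in>unit_disc. deriv g2 z / deriv h2 z = z"
    and "\<alpha>1 \<ge> \<alpha>2"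
    and "0 \<le> t" and "t \<le> 1"
  shows "(\<lambda>z. complex_of_real t * f1 z + complex_of_real (1 - t) * f2 z) \<in> S_H \<and>
         open ((\<lambda>z. complex_of_real t * f1 z + complex_of_real (1 - t) * f2 z) ` unit_disc) \<and>
         connected ((\<lambda>z. complex_of_real t * f1 z + complex_of_real (1 - t) * f2 z) ` unit_disc) \<and>
         convex_in_imag_direction
           ((\<lambda>z. complex_of_real t * f1 z + complex_of_real (1 - t) * f2 z) ` unit_disc)"
proof -
  note A = assms
  define D where "D = unit_disc"
  have oD: "open D" unfolding D_def by (rule open_disc)
  define F where "F = (\<lambda>z. complex_of_real t * f1 z + complex_of_real (1 - t) * f2 z)"
  define al where "al = t * \<alpha>1 + (1-t) * \<alpha>2"
  have alr: "-1 \<le> al" "al \<le> 1"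
  proof -
    have "t * (-1) + (1-t) * (-1) \<le> al" unfolding al_def using A(1,2,12,13)
      by (intro add_mono mult_left_mono) auto
    then show "-1 \<le> al" by simp
    have "al \<le> t * 1 + (1-t) * 1" unfolding al_def using A(1,2,12,13)
      by (intro add_mono mult_left_mono) auto
    then show "al \<le> 1" by simp
  qed
  define h where "h = (\<lambda>z. complex_of_real t * h1 z + complex_of_real (1 - t) * h2 z)"
  define g where "g = (\<lambda>z. complex_of_real t * g1 z + complex_of_real (1 - t) * g2 z)"
  have h1h: "h1 holomorphic_on D" "g1 holomorphic_on D" "\<forall>z\<in>D. f1 z = h1 z + cnj (g1 z)"
    using A(5) unfolding harmonic_decomp_def D_def by auto
  have h2h: "h2 holomorphic_on D" "g2 holomorphic_on D" "\<forall>z\<in>D. f2 z = h2 z + cnj (g2 z)"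
    using A(6) unfolding harmonic_decomp_def D_def by auto
  have hh: "h holomorphic_on D" unfolding h_def using h1h h2h by (intro holomorphic_intros) auto
  have gh: "g holomorphic_on D" unfolding g_def using h1h h2h by (intro holomorphic_intros) auto
  have Fhg: "\<forall>z\<in>D. F z = h z + cnj (g z)"
    unfolding F_def h_def g_def using h1h(3) h2h(3) by (simp add: algebra_simps)
  have a9: "\<forall>z\<in>unit_disc. deriv g1 z / deriv h1 z = complex_of_real (-1) * z" using A(9) by simp
  have a10: "\<forall>z\<in>unit_disc. deriv g2 z / deriv h2 z = complex_of_real 1 * z" using A(10) by simp
  have cd1: "\<And>z. z \<in> D \<Longrightarrow> deriv h1 z \<noteq> 0 \<and> deriv g1 z = complex_of_real (-1) * z * deriv h1 z \<and>
         deriv h1 z * (1 + complex_of_real (-1) * z) = (1 - 2 * complex_of_real \<alpha>1 * z + z^2) / (1 - z^2)^2"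
    using comp_deriv[OF A(3) A(5) A(7) a9] unfolding D_def by blast
  have cd2: "\<And>z. z \<in> D \<Longrightarrow> deriv h2 z \<noteq> 0 \<and> deriv g2 z = complex_of_real 1 * z * deriv h2 z \<and>
         deriv h2 z * (1 + complex_of_real 1 * z) = (1 - 2 * complex_of_real \<alpha>2 * z + z^2) / (1 - z^2)^2"
    using comp_deriv[OF A(4) A(6) A(8) a10] unfolding D_def by blast
  have dh: "deriv h z = complex_of_real t * deriv h1 z + complex_of_real (1-t) * deriv h2 z" if "z \<in> D" for z
  proof -
    have "(h has_field_derivative complex_of_real t * deriv h1 z + complex_of_real (1-t) * deriv h2 z) (at z)"
      unfolding h_def using holomorphic_derivI[OF h1h(1) oD that] holomorphic_derivI[OF h2h(1) oD that]
      by (intro DERIV_add DERIV_cmult) auto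
    then show ?thesis by (rule DERIV_imp_deriv)
  qed
  have dg: "deriv g z = complex_of_real t * deriv g1 z + complex_of_real (1-t) * deriv g2 z" if "z \<in> D" for z
  proof -
    have "(g has_field_derivative complex_of_real t * deriv g1 z + complex_of_real (1-t) * deriv g2 z) (at z)"
      unfolding g_def using holomorphic_derivI[OF h1h(2) oD that] holomorphic_derivI[OF h2h(2) oD that]
      by (intro DERIV_add DERIV_cmult) auto
    then show ?thesis by (rule DERIV_imp_deriv)
  qed
  have sense: "\<forall>z\<in>D. deriv h z \<noteq> 0 \<and> norm (deriv g z / deriv h z) < 1"
  proof
    fix z assume zD: "z \<in> D"
    have nz: "norm z < 1" using zD unfolding D_def disc_norm .
    have "complex_of_real t * deriv h1 z + complex_of_real (1-t) * deriv h2 z \<noteq> 0 \<and>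
     norm ((complex_of_real t * (complex_of_real (-1) * z * deriv h1 z) + complex_of_real (1-t) * (complex_of_real 1 * z * deriv h2 z))
        / (complex_of_real t * deriv h1 z + complex_of_real (1-t) * deriv h2 z)) < 1"
      using sense_main[OF nz _ A(11) _ A(12,13), of "deriv h1 z" "deriv h2 z"] A(1,2) cd1[OF zD] cd2[OF zD] by auto
    then show "deriv h z \<noteq> 0 \<and> norm (deriv g z / deriv h z) < 1"
      using dh[OF zD] dg[OF zD] cd1[OF zD] cd2[OF zD] by simp
  qed
  have F0: "F 0 = 0"
  proof -
    have "f1 0 = 0" "f2 0 = 0" using A(3,4) unfolding S_H_def by auto
    then show ?thesis unfolding F_def by simp
  qed
  have D0: "0 \<in> D" unfolding D_def disc_norm by simp
  have dh0: "deriv h 0 = 1" using dh[OF D0] cd1[OF D0] cd2[OF D0] by simp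
  have hgphi: "\<forall>z\<in>D. h z + g z = z * (1 - complex_of_real al * z) / (1 - z^2)"
  proof
    fix z assume zD: "z \<in> D"
    have "h z + g z = complex_of_real t * (h1 z + g1 z) + complex_of_real (1-t) * (h2 z + g2 z)"
      unfolding h_def g_def by (simp add: algebra_simps)
    also have "\<dots> = complex_of_real t * (z * (1 - complex_of_real \<alpha>1 * z) / (1 - z^2)) +
         complex_of_real (1-t) * (z * (1 - complex_of_real \<alpha>2 * z) / (1 - z^2))"
      using A(7,8) zD unfolding D_def by simp
    also have "\<dots> = z * (1 - complex_of_real al * z) / (1 - z^2)" unfolding al_def by (rule lin_phi)
    finally show "h z + g z = z * (1 - complex_of_real al * z) / (1 - z^2)" .
  qed
  have ReF: "\<And>z. z \<in> D \<Longrightarrow> Re (F z) = Re (z * (1 - complex_of_real al * z) / (1 - z^2))"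
  proof -
    fix z assume zD: "z \<in> D"
    have "Re (F z) = Re (h z + g z)" using Fhg zD by simp
    then show "Re (F z) = Re (z * (1 - complex_of_real al * z) / (1 - z^2))" using hgphi zD by simp
  qed
  have ImF: "\<And>z. z \<in> D \<Longrightarrow> Im (F z) = Im (h z) - Im (g z)" using Fhg by simp
  have hgPhi: "\<And>s. \<bar>Im s\<bar> < pi/2 \<Longrightarrow> h (Psi s) + g (Psi s) =
        (of_real (1-al) * exp s - of_real (1+al) * exp (-s)) / 4 + of_real al / 2"
  proof -
    fix s :: complex assume s: "\<bar>Im s\<bar> < pi/2"
    have "Psi s \<in> D" using Psi_in[OF s] unfolding D_def disc_norm by simp
    then show "h (Psi s) + g (Psi s) = (of_real (1-al) * exp s - of_real (1+al) * exp (-s)) / 4 + of_real al / 2"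
      using hgphi phi_Psi[OF s, of al] by simp
  qed
  define a where "a = 1 - al"
  define b where "b = 1 + al"
  have ab: "a \<ge> 0" "b \<ge> 0" "a + b > 0" unfolding a_def b_def using alr by auto
  define K where "K = (\<lambda>c::real. 4 * c - 2 * al)"
  define V where "V = (\<lambda>c. (a > 0 \<or> K c < 0) \<and> (b > 0 \<or> K c > 0))"
  define sig where "sig = (\<lambda>c th. ln (solx a b (K c / cos th)))"
  define gam where "gam = (\<lambda>c th. Psi (Complex (sig c th) th))"
  define I where "I = {th::real. \<bar>th\<bar> < pi/2}"
  have RePhi: "\<And>s. Re ((of_real (1-al) * exp s - of_real (1+al) * exp (-s)) / 4 + of_real al / 2)
      = cos (Im s) * (a * exp (Re s) - b * exp (- Re s)) / 4 + al / 2"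
    unfolding a_def b_def by (rule Re_Phi)
  have LA: "V c \<and> (\<exists>th\<in>I. z = gam c th)" if zD: "z \<in> D" and zc: "Re (F z) = c" for z c
  proof -
    obtain s where s: "\<bar>Im s\<bar> < pi/2" "Psi s = z" using Psi_surj zD unfolding D_def disc_norm by blast
    have "Re (h (Psi s) + g (Psi s)) = c" using zc ReF[OF zD] hgphi zD s(2) by simp
    moreover have "Re (h (Psi s) + g (Psi s)) = cos (Im s) * (a * exp (Re s) - b * exp (- Re s)) / 4 + al / 2"
      unfolding hgPhi[OF s(1)] by (rule RePhi)
    ultimately have "cos (Im s) * (a * exp (Re s) - b * exp (- Re s)) / 4 + al / 2 = c" by linarith
    then have lev: "cos (Im s) * (a * exp (Re s) - b * exp (- Re s)) = K c" unfolding K_def by simp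
    have cs: "cos (Im s) > 0" using s(1) by (intro cos_gt_zero_pi) auto
    have vf: "(a > 0 \<or> a * exp (Re s) - b / exp (Re s) < 0) \<and> (b > 0 \<or> a * exp (Re s) - b / exp (Re s) > 0)"
      using V_from[OF ab exp_gt_zero] .
    have "exp (- Re s) = 1 / exp (Re s)" by (simp add: exp_minus inverse_eq_divide)
    then have lev2: "K c = cos (Im s) * (a * exp (Re s) - b / exp (Re s))" using lev by simp
    have Vc: "V c" unfolding V_def lev2 using vf cs by (auto simp: mult_pos_neg mult_pos_pos)
    have ab2: "a > 0 \<or> K c < 0" "b > 0 \<or> K c > 0" using Vc unfolding V_def by auto
    have "Re s = ln (solx a b (K c / cos (Im s)))"
      using curve(3)[OF ab ab2 s(1) lev] .
    then have "s = Complex (sig c (Im s)) (Im s)" unfolding sig_def by (simp add: complex_eq_iff)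
    then have "z = gam c (Im s)" unfolding gam_def using s(2) by simp
    moreover have "Im s \<in> I" unfolding I_def using s(1) by simp
    ultimately show ?thesis using Vc by blast
  qed
  have LB: "gam c th \<in> D \<and> Re (F (gam c th)) = c" if Vc: "V c" and thI: "th \<in> I" for c th
  proof -
    have th: "\<bar>th\<bar> < pi/2" using thI unfolding I_def by simp
    have ab2: "a > 0 \<or> K c < 0" "b > 0 \<or> K c > 0" using Vc unfolding V_def by auto
    have ims: "\<bar>Im (Complex (sig c th) th)\<bar> < pi/2" using th by simp
    have gD: "gam c th \<in> D" unfolding gam_def D_def disc_norm using Psi_in[OF ims] by simp
    have "Re (F (gam c th)) = Re (h (gam c th) + g (gam c th))" using ReF[OF gD] hgphi gD by simp
    also have "\<dots> = cos th * (a * exp (sig c th) - b * exp (- sig c th)) / 4 + al / 2"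
      unfolding gam_def using hgPhi[OF ims] RePhi by simp
    also have "cos th * (a * exp (sig c th) - b * exp (- sig c th)) = K c"
      unfolding sig_def using curve(1)[OF ab ab2 th] .
    finally have "Re (F (gam c th)) = K c / 4 + al / 2" .
    then show ?thesis using gD unfolding K_def by (simp add: field_simps)
  qed
  have LC: "\<And>th1 th2. th1 \<in> I \<Longrightarrow> th2 \<in> I \<Longrightarrow> th1 < th2 \<Longrightarrow> Im (F (gam c th1)) < Im (F (gam c th2))"
    if Vc: "V c" for c
  proof -
    fix th1 th2 assume t1: "th1 \<in> I" and t2: "th2 \<in> I" and lt: "th1 < th2"
    have ab2: "a > 0 \<or> K c < 0" "b > 0 \<or> K c > 0" using Vc unfolding V_def by auto
    define q where "q = (\<lambda>th. Im (h (Psi (Complex (sig c th) th))) - Im (g (Psi (Complex (sig c th) th))))"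
    have qd: "\<exists>y. (q has_real_derivative y) (at x) \<and> y > 0" if "th1 \<le> x" "x \<le> th2" for x
    proof -
      have x: "\<bar>x\<bar> < pi/2" using t1 t2 that unfolding I_def by auto
      have lev: "\<And>th. \<bar>th\<bar> < pi/2 \<Longrightarrow> Re ((of_real (1-al) * exp (Complex (sig c th) th) - of_real (1+al) * exp (- Complex (sig c th) th)) / 4 + of_real al / 2) = c"
      proof -
        fix th :: real assume th: "\<bar>th\<bar> < pi/2"
        have "th \<in> I" using th unfolding I_def by simp
        then have "Re (F (gam c th)) = c" using LB[OF Vc] by blast
        moreover have "gam c th \<in> D" using LB[OF Vc \<open>th \<in> I\<close>] by blast
        moreover have "\<bar>Im (Complex (sig c th) th)\<bar> < pi/2" using th by simp
        moreover have "Re (F (gam c th)) = Re (h (gam c th) + g (gam c th))"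
          using ReF hgphi \<open>gam c th \<in> D\<close> by simp
        moreover have "h (gam c th) + g (gam c th) = (of_real (1-al) * exp (Complex (sig c th) th) - of_real (1+al) * exp (- Complex (sig c th) th)) / 4 + of_real al / 2"
          unfolding gam_def by (rule hgPhi) (use th in simp)
        ultimately show "Re ((of_real (1-al) * exp (Complex (sig c th) th) - of_real (1+al) * exp (- Complex (sig c th) th)) / 4 + of_real al / 2) = c"
          by simp
      qed
      have sgd: "\<And>th. \<bar>th\<bar> < pi/2 \<Longrightarrow> \<exists>d. (sig c has_real_derivative d) (at th)"
        unfolding sig_def using curve(2)[OF ab ab2] by blast
      have ab': "1 - al \<ge> 0" "1 + al \<ge> 0" "(1-al) + (1+al) > 0" using ab unfolding a_def b_def by auto
      from curve_deriv[OF hh[unfolded D_def] gh[unfolded D_def] sense[unfolded D_def] hgPhi ab' sgd lev x]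
      show ?thesis unfolding q_def by blast
    qed
    have "q th1 < q th2" by (rule DERIV_pos_imp_increasing[OF lt qd]) auto
    moreover have "gam c th1 \<in> D" "gam c th2 \<in> D" using LB[OF Vc t1] LB[OF Vc t2] by auto
    ultimately show "Im (F (gam c th1)) < Im (F (gam c th2))"
      unfolding q_def using ImF unfolding gam_def by simp
  qed
  have LD: "continuous_on I (\<lambda>th. F (gam c th))" if Vc: "V c" for c
  proof -
    have ab2: "a > 0 \<or> K c < 0" "b > 0 \<or> K c > 0" using Vc unfolding V_def by auto
    have cg: "continuous_on I (gam c)"
    proof (rule continuous_at_imp_continuous_on, rule ballI)
      fix th assume thI: "th \<in> I"
      have th: "\<bar>th\<bar> < pi/2" using thI unfolding I_def by simp
      obtain d where d: "(sig c has_real_derivative d) (at th)" using curve(2)[OF ab ab2 th] unfolding sig_def by blast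
      have ds: "((\<lambda>th. Complex (sig c th) th) has_vector_derivative Complex d 1) (at th)"
        unfolding has_vector_derivative_complex_iff using d by (auto intro!: derivative_eq_intros)
      have ims: "\<bar>Im (Complex (sig c th) th)\<bar> < pi/2" using th by simp
      obtain p where p: "(Psi has_field_derivative p) (at (Complex (sig c th) th))"
        using Psi_deriv Psi_in[OF ims] by blast
      have "((Psi \<circ> (\<lambda>th. Complex (sig c th) th)) has_vector_derivative (Complex d 1 * p)) (at th)"
        using field_vector_diff_chain_at[OF ds p] .
      then have "continuous (at th) (Psi \<circ> (\<lambda>th. Complex (sig c th) th))"
        by (rule has_vector_derivative_continuous)
      then show "isCont (gam c) th" unfolding gam_def o_def by simp
    qed
    have cF: "continuous_on D F"
    proof -
      have "continuous_on D (\<lambda>z. h z + cnj (g z))"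
        using holomorphic_on_imp_continuous_on[OF hh] holomorphic_on_imp_continuous_on[OF gh]
        by (intro continuous_intros) auto
      then show ?thesis by (rule continuous_on_eq) (use Fhg in auto)
    qed
    have "gam c ` I \<subseteq> D" using LB[OF Vc] by blast
    then show ?thesis using continuous_on_compose2[OF cF cg] by blast
  qed
  have inj: "inj_on F D"
  proof (rule inj_onI)
    fix z1 z2 assume z1: "z1 \<in> D" and z2: "z2 \<in> D" and eq: "F z1 = F z2"
    define c where "c = Re (F z1)"
    obtain th1 where Vc: "V c" and t1: "th1 \<in> I" and e1: "z1 = gam c th1" using LA[OF z1] c_def by blast
    obtain th2 where t2: "th2 \<in> I" and e2: "z2 = gam c th2" using LA[OF z2] c_def eq by metis
    have "th1 = th2"
    proof (rule ccontr)
      assume "th1 \<noteq> th2"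
      then have "th1 < th2 \<or> th2 < th1" by linarith
      then have "Im (F (gam c th1)) \<noteq> Im (F (gam c th2))" using LC[OF Vc] t1 t2 by (metis less_irrefl)
      then show False using eq e1 e2 by simp
    qed
    then show "z1 = z2" using e1 e2 by simp
  qed
  have SH: "F \<in> S_H"
    unfolding S_H_def harmonic_decomp_def
    using hh gh Fhg inj sense F0 dh0 unfolding D_def by blast
  have opn: "open (F ` D)"
    by (rule open_image[OF hh gh oD sense Fhg])
  have conn: "connected (F ` D)"
  proof -
    have cF: "continuous_on D F"
    proof -
      have "continuous_on D (\<lambda>z. h z + cnj (g z))"
        using holomorphic_on_imp_continuous_on[OF hh] holomorphic_on_imp_continuous_on[OF gh]
        by (intro continuous_intros) auto
      then show ?thesis by (rule continuous_on_eq) (use Fhg in auto)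
    qed
    have "connected D" unfolding D_def unit_disc_def by simp
    then show ?thesis using connected_continuous_image[OF cF] by blast
  qed
  have cvx: "convex_in_imag_direction (F ` D)"
    unfolding convex_in_imag_direction_def
  proof
    fix c :: real
    show "connected {w \<in> F ` D. Re w = c}"
    proof (cases "V c")
      case True
      have "{w \<in> F ` D. Re w = c} = (\<lambda>th. F (gam c th)) ` I"
      proof
        show "{w \<in> F ` D. Re w = c} \<subseteq> (\<lambda>th. F (gam c th)) ` I"
        proof
          fix w assume "w \<in> {w \<in> F ` D. Re w = c}"
          then obtain z where zD: "z \<in> D" and wz: "w = F z" and rc: "Re (F z) = c" by auto
          obtain th where "th \<in> I" "z = gam c th" using LA[OF zD rc] by blast
          then show "w \<in> (\<lambda>th. F (gam c th)) ` I" using wz by blast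
        qed
        show "(\<lambda>th. F (gam c th)) ` I \<subseteq> {w \<in> F ` D. Re w = c}"
          using LB[OF True] by blast
      qed
      moreover have "connected I"
      proof -
        have "I = {-(pi/2)<..<pi/2}" unfolding I_def by (auto simp: abs_less_iff)
        then show ?thesis by simp
      qed
      ultimately show ?thesis using connected_continuous_image[OF LD[OF True]] by simp
    next
      case False
      have e: "{w \<in> F ` D. Re w = c} = {}" using LA False by blast
      show ?thesis unfolding e by (rule connected_empty)
    qed
  qed
  show ?thesis using SH opn conn cvx unfolding F_def D_def by blast
qed

end
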